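(* For every integer $k\ge 7$, let $C_k$ be the cycle on $k$ vertices and $G=KB(C_k)$. Then for every vertex $q$ of $G$, the graph $G-\{q\}$ is not a biclique graph.
   Context: All graphs are finite, simple, undirected and connected. A biclique of a graph $H$ is a maximal (with respect to vertex-set inclusion) set of vertices inducing a complete bipartite subgraph $K_{r,s}$ with $r,s\ge 1$. The biclique graph $KB(H)$ is the intersection graph of the family of all bicliques of $H$: its vertices are the bicliques of $H$, and two bicliques are adjacent iff they share at least one vertex. A graph $G$ is a biclique graph if $G=KB(H)$ (up to isomorphism) for some graph $H$. *)

theory Defs
  imports Main
begin

definition simple_graph :: "'a set \<Rightarrow> ('a \<times> 'a) set \<Rightarrow> bool" where
  "simple_graph V E \<longleftrightarrow> finite V \<and> E \<subseteq> V \<times> V \<and> sym E \<and> irrefl E"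

definition connected_graph :: "'a set \<Rightarrow> ('a \<times> 'a) set \<Rightarrow> bool" where
  "connected_graph V E \<longleftrightarrow> V \<noteq> {} \<and> (\<forall>u\<in>V. \<forall>v\<in>V. (u, v) \<in> E\<^sup>*)"

definition induces_complete_bipartite :: "'a set \<Rightarrow> ('a \<times> 'a) set \<Rightarrow> 'a set \<Rightarrow> bool" where
  "induces_complete_bipartite V E S \<longleftrightarrow> S \<subseteq> V \<and>
     (\<exists>X Y. X \<noteq> {} \<and> Y \<noteq> {} \<and> X \<inter> Y = {} \<and> X \<union> Y = S \<and>
        (\<forall>x\<in>X. \<forall>y\<in>Y. (x, y) \<in> E) \<and>
        (\<forall>x\<in>X. \<forall>x'\<in>X. (x, x') \<notin> E) \<and>
        (\<forall>y\<in>Y. \<forall>y'\<in>Y. (y, y') \<notin> E))"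

definition is_biclique :: "'a set \<Rightarrow> ('a \<times> 'a) set \<Rightarrow> 'a set \<Rightarrow> bool" where
  "is_biclique V E S \<longleftrightarrow> induces_complete_bipartite V E S \<and>
     (\<forall>T. induces_complete_bipartite V E T \<and> S \<subseteq> T \<longrightarrow> T = S)"

definition bicliques :: "'a set \<Rightarrow> ('a \<times> 'a) set \<Rightarrow> 'a set set" where
  "bicliques V E = {S. is_biclique V E S}"

definition KB_edges :: "'a set \<Rightarrow> ('a \<times> 'a) set \<Rightarrow> ('a set \<times> 'a set) set" where
  "KB_edges V E = {(B1, B2). B1 \<in> bicliques V E \<and> B2 \<in> bicliques V E \<and> B1 \<noteq> B2 \<and> B1 \<inter> B2 \<noteq> {}}"

definition cycle_verts :: "nat \<Rightarrow> nat set" where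
  "cycle_verts k = {0..<k}"

definition cycle_edges :: "nat \<Rightarrow> (nat \<times> nat) set" where
  "cycle_edges k = {(i, j). i < k \<and> j < k \<and> (j = (i + 1) mod k \<or> i = (j + 1) mod k)}"

definition del_edges :: "('a \<times> 'a) set \<Rightarrow> 'a \<Rightarrow> ('a \<times> 'a) set" where
  "del_edges E q = {(u, v). (u, v) \<in> E \<and> u \<noteq> q \<and> v \<noteq> q}"

definition graph_iso :: "'a set \<Rightarrow> ('a \<times> 'a) set \<Rightarrow> 'b set \<Rightarrow> ('b \<times> 'b) set \<Rightarrow> bool" where
  "graph_iso V1 E1 V2 E2 \<longleftrightarrow> (\<exists>f. bij_betw f V1 V2 \<and>
     (\<forall>u\<in>V1. \<forall>v\<in>V1. (u, v) \<in> E1 \<longleftrightarrow> (f u, f v) \<in> E2))"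

text \<open>G is a biclique graph iff G \<cong> KB(H) for some finite simple connected graph H.
  Since H is finite, w.l.o.g. its vertices are natural numbers.\<close>
definition is_biclique_graph :: "'b set \<Rightarrow> ('b \<times> 'b) set \<Rightarrow> bool" where
  "is_biclique_graph V E \<longleftrightarrow> (\<exists>(VH :: nat set) EH. simple_graph VH EH \<and> connected_graph VH EH \<and>
     graph_iso (bicliques VH EH) (KB_edges VH EH) V E)"

end

theory Submission
  imports Defs
begin

definition cbp :: "('a \<times> 'a) set \<Rightarrow> 'a set \<Rightarrow> 'a set \<Rightarrow> bool" where
  "cbp E X Y \<longleftrightarrow> X \<noteq> {} \<and> Y \<noteq> {} \<and> X \<inter> Y = {} \<and>
        (\<forall>x\<in>X. \<forall>y\<in>Y. (x, y) \<in> E) \<and>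
        (\<forall>x\<in>X. \<forall>x'\<in>X. (x, x') \<notin> E) \<and>
        (\<forall>y\<in>Y. \<forall>y'\<in>Y. (y, y') \<notin> E)"

lemma icb_iff: "induces_complete_bipartite V E S \<longleftrightarrow> S \<subseteq> V \<and> (\<exists>X Y. cbp E X Y \<and> X \<union> Y = S)"
  unfolding induces_complete_bipartite_def cbp_def by (simp add: conj_ac)

lemma cbp_sym: "cbp E X Y \<Longrightarrow> sym E \<Longrightarrow> cbp E Y X"
  unfolding cbp_def sym_def by blast

lemma parts_with:
  assumes "is_biclique V E S" "x \<in> S" "sym E"
  shows "\<exists>X Y. cbp E X Y \<and> X \<union> Y = S \<and> x \<in> X"
proof -
  from assms(1) have "induces_complete_bipartite V E S" unfolding is_biclique_def by (elim conjE)
  then obtain X Y where "cbp E X Y" "X \<union> Y = S"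
    unfolding icb_iff by (elim conjE exE)
  show ?thesis
  proof (cases "x \<in> X")
    case True then show ?thesis using \<open>cbp E X Y\<close> \<open>X \<union> Y = S\<close> by blast
  next
    case False
    then have "x \<in> Y" using assms(2) \<open>X \<union> Y = S\<close> by blast
    moreover have "cbp E Y X" using cbp_sym[OF \<open>cbp E X Y\<close> assms(3)] .
    moreover have "Y \<union> X = S" using \<open>X \<union> Y = S\<close> by blast
    ultimately show ?thesis by blast
  qed
qed

lemma icb_sub: "induces_complete_bipartite V E S \<Longrightarrow> S \<subseteq> V"
  unfolding induces_complete_bipartite_def by (elim conjE)

lemma biclique_sub: "is_biclique V E S \<Longrightarrow> S \<subseteq> V"
  unfolding is_biclique_def using icb_sub by (elim conjE)

lemma extend:
  assumes "finite V" "induces_complete_bipartite V E T"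
  shows "\<exists>S. is_biclique V E S \<and> T \<subseteq> S"
proof -
  define A where "A = {U. induces_complete_bipartite V E U \<and> T \<subseteq> U}"
  have "A \<subseteq> Pow V" unfolding A_def using icb_sub by blast
  hence fA: "finite A" using assms(1) finite_subset by (metis finite_Pow_iff)
  have TA: "T \<in> A" unfolding A_def using assms(2) by simp
  hence nA: "A \<noteq> {}" by auto
  from finite_has_maximal[OF fA nA] obtain m where m: "m \<in> A" "\<forall>b\<in>A. m \<le> b \<longrightarrow> m = b"
    by (elim bexE)
  have mi: "induces_complete_bipartite V E m" "T \<subseteq> m" using m(1) unfolding A_def by simp_all
  have "is_biclique V E m" unfolding is_biclique_def
  proof (intro conjI allI impI)
    show "induces_complete_bipartite V E m" using mi(1) .
  next
    fix T' assume h: "induces_complete_bipartite V E T' \<and> m \<subseteq> T'"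
    then have "T' \<in> A" unfolding A_def using mi(2) by auto
    then show "T' = m" using m(2) h by (metis (no_types))
  qed
  then show ?thesis using mi(2) by blast
qed

lemma edge_icb:
  assumes "simple_graph V E" "(a, b) \<in> E"
  shows "induces_complete_bipartite V E {a, b}"
proof -
  have ir: "\<And>z. (z, z) \<notin> E" using assms(1) unfolding simple_graph_def irrefl_def by blast
  have "cbp E {a} {b}" using assms(2) ir unfolding cbp_def by auto
  moreover have "{a,b} \<subseteq> V" using assms unfolding simple_graph_def by blast
  moreover have "{a} \<union> {b} = {a, b}" by auto
  ultimately show ?thesis unfolding icb_iff by blast
qed

lemma edge_in_biclique:
  assumes "simple_graph V E" "(a, b) \<in> E"
  shows "\<exists>D. is_biclique V E D \<and> a \<in> D \<and> b \<in> D"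
  using extend[OF _ edge_icb[OF assms]] assms(1) unfolding simple_graph_def by blast

lemma half:
  assumes G: "simple_graph V E"
    and hyp: "\<And>D. is_biclique V E D \<Longrightarrow> D \<inter> B \<noteq> {} \<Longrightarrow> D \<inter> B' \<noteq> {} \<Longrightarrow> D = B \<or> D = B'"
    and P: "cbp E X Y" "X \<union> Y = B" "cbp E X' Y'" "X' \<union> Y' = B'" "Y \<subseteq> Y'"
    and C: "is_biclique V E C" "C \<inter> B \<noteq> {}" "C \<inter> B' = {}"
    and BV: "B \<subseteq> V"
  shows False
proof -
  have sy: "sym E" and ir: "\<And>z. (z, z) \<notin> E" and fin: "finite V"
    using G unfolding simple_graph_def irrefl_def by auto
  obtain w where w: "w \<in> C" "w \<in> B" using C by blast
  have wB': "w \<notin> B'" using w C by blast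
  have wX: "w \<in> X" using w wB' P by blast
  obtain u where u: "u \<in> C" "(w, u) \<in> E"
  proof -
    from C(1) obtain P1 Q1 where "cbp E P1 Q1" "P1 \<union> Q1 = C" "w \<in> P1"
      using parts_with[OF C(1) w(1) sy] by blast
    then obtain u where "u \<in> Q1" "(w,u) \<in> E" unfolding cbp_def by blast
    then show ?thesis using that \<open>P1 \<union> Q1 = C\<close> by blast
  qed
  have uB': "u \<notin> B'" using u C by blast
  have uX: "u \<notin> X" using u(2) wX P(1) unfolding cbp_def by blast
  have uB: "u \<notin> B" using uX uB' P by blast
  have YB': "Y \<subseteq> B'" using P by blast
  have nuy: "(u, y) \<notin> E" if "y \<in> Y" for y
  proof
    assume "(u, y) \<in> E"
    then obtain D where D: "is_biclique V E D" "u \<in> D" "y \<in> D" using edge_in_biclique[OF G] by blast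
    have "D \<inter> B \<noteq> {}" "D \<inter> B' \<noteq> {}" using D that YB' P by blast+
    then show False using hyp[OF D(1)] D uB uB' by blast
  qed
  have wu: "w \<noteq> u" using u ir by blast
  have "cbp E {w} (insert u Y)"
    unfolding cbp_def
  proof (intro conjI)
    show "{w} \<inter> insert u Y = {}" using wu wX P(1) unfolding cbp_def by blast
    show "\<forall>x\<in>{w}. \<forall>y\<in>insert u Y. (x, y) \<in> E" using u wX P(1) unfolding cbp_def by blast
    show "\<forall>x\<in>{w}. \<forall>x'\<in>{w}. (x, x') \<notin> E" using ir by blast
    show "\<forall>y\<in>insert u Y. \<forall>y'\<in>insert u Y. (y, y') \<notin> E"
      using nuy ir P(1) sy unfolding cbp_def sym_def by blast
  qed auto
  moreover have "{w} \<union> insert u Y \<subseteq> V"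
  proof -
    have "C \<subseteq> V" using biclique_sub[OF C(1)] .
    then show ?thesis using u w P(2) BV by blast
  qed
  ultimately have "induces_complete_bipartite V E ({w} \<union> insert u Y)"
    unfolding icb_iff by blast
  then obtain D where D: "is_biclique V E D" "{w} \<union> insert u Y \<subseteq> D" using extend fin by blast
  obtain y where "y \<in> Y" using P(1) unfolding cbp_def by blast
  then have "y \<in> D" "y \<in> B" "y \<in> B'" using D(2) YB' P(2) by blast+
  then have "D \<inter> B \<noteq> {}" "D \<inter> B' \<noteq> {}" by blast+
  then have "D = B \<or> D = B'" using hyp[OF D(1)] by blast
  moreover have "u \<in> D" using D(2) by blast
  ultimately show False using uB uB' by blast
qed

lemma cbp_E: "cbp E X Y \<Longrightarrow> x \<in> X \<Longrightarrow> y \<in> Y \<Longrightarrow> (x, y) \<in> E"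
  unfolding cbp_def by blast
lemma cbp_IX: "cbp E X Y \<Longrightarrow> x \<in> X \<Longrightarrow> x' \<in> X \<Longrightarrow> (x, x') \<notin> E"
  unfolding cbp_def by blast
lemma cbp_IY: "cbp E X Y \<Longrightarrow> y \<in> Y \<Longrightarrow> y' \<in> Y \<Longrightarrow> (y, y') \<notin> E"
  unfolding cbp_def by blast

lemma F1:
  assumes G: "simple_graph V E"
    and hyp: "\<And>D. is_biclique V E D \<Longrightarrow> D \<inter> B \<noteq> {} \<Longrightarrow> D \<inter> B' \<noteq> {} \<Longrightarrow> D = B \<or> D = B'"
    and P: "cbp E X Y" "X \<union> Y = B" "cbp E X' Y'" "X' \<union> Y' = B'" "x \<in> X" "x \<in> X'"
  shows "Y \<subseteq> Y' \<or> Y' \<subseteq> Y"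
proof (rule ccontr)
  assume "\<not> (Y \<subseteq> Y' \<or> Y' \<subseteq> Y)"
  then obtain y z where yz: "y \<in> Y" "y \<notin> Y'" "z \<in> Y'" "z \<notin> Y" by blast
  have sy: "sym E" and ir: "\<And>z. (z, z) \<notin> E" and fin: "finite V" and EV: "E \<subseteq> V \<times> V"
    using G unfolding simple_graph_def irrefl_def by auto
  have xy: "(x, y) \<in> E" using cbp_E[OF P(1) P(5) yz(1)] .
  have xz: "(x, z) \<in> E" using cbp_E[OF P(3) P(6) yz(3)] .
  have yB: "y \<in> B" using yz(1) P(2) by blast
  have zB': "z \<in> B'" using yz(3) P(4) by blast
  have "\<exists>D. is_biclique V E D \<and> y \<in> D \<and> z \<in> D"
  proof (cases "(y, z) \<in> E")
    case True
    then show ?thesis using edge_in_biclique[OF G] by blast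
  next
    case False
    have yz': "y \<noteq> z" using yz by blast
    have "cbp E {x} {y, z}" unfolding cbp_def
    proof (intro conjI)
      show "{x} \<inter> {y, z} = {}" using xy xz ir by blast
      show "\<forall>xa\<in>{y, z}. \<forall>y'\<in>{y, z}. (xa, y') \<notin> E"
        using False ir sy unfolding sym_def by blast
    qed (use xy xz ir in auto)
    moreover have "{x} \<union> {y,z} \<subseteq> V" using xy xz EV by blast
    ultimately have "induces_complete_bipartite V E ({x} \<union> {y,z})" unfolding icb_iff by blast
    then obtain D where "is_biclique V E D" "{x} \<union> {y,z} \<subseteq> D" using extend fin by blast
    then show ?thesis by blast
  qed
  then obtain D where D: "is_biclique V E D" "y \<in> D" "z \<in> D" by blast
  have "D \<inter> B \<noteq> {}" using D(2) yB by blast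
  moreover have "D \<inter> B' \<noteq> {}" using D(3) zB' by blast
  ultimately have DD: "D = B \<or> D = B'" using hyp[OF D(1)] by blast
  have zX: "z \<notin> X" using cbp_IX[OF P(1) P(5)] xz by blast
  have zB: "z \<notin> B" using zX yz(4) P(2) by blast
  have yX': "y \<notin> X'" using cbp_IX[OF P(3) P(6)] xy by blast
  have yB': "y \<notin> B'" using yX' yz(2) P(4) by blast
  show False using DD D zB yB' by blast
qed

lemma keyL:
  assumes G: "simple_graph V E"
    and hB: "is_biclique V E B" and hB': "is_biclique V E B'"
    and x: "x \<in> B" "x \<in> B'"
    and hyp: "\<And>D. is_biclique V E D \<Longrightarrow> D \<inter> B \<noteq> {} \<Longrightarrow> D \<inter> B' \<noteq> {} \<Longrightarrow> D = B \<or> D = B'"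
    and C: "is_biclique V E C" "C \<inter> B \<noteq> {}" "C \<inter> B' = {}"
    and C': "is_biclique V E C'" "C' \<inter> B' \<noteq> {}" "C' \<inter> B = {}"
  shows False
proof -
  have sy: "sym E" using G unfolding simple_graph_def by auto
  obtain X Y where P1: "cbp E X Y" "X \<union> Y = B" "x \<in> X" using parts_with[OF hB x(1) sy] by blast
  obtain X' Y' where P2: "cbp E X' Y'" "X' \<union> Y' = B'" "x \<in> X'" using parts_with[OF hB' x(2) sy] by blast
  have hyp': "\<And>D. is_biclique V E D \<Longrightarrow> D \<inter> B' \<noteq> {} \<Longrightarrow> D \<inter> B \<noteq> {} \<Longrightarrow> D = B' \<or> D = B"
    using hyp by blast
  from F1[OF G hyp P1(1,2) P2(1,2) P1(3) P2(3)]
  show False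
  proof
    assume "Y \<subseteq> Y'"
    then show False using half[OF G hyp P1(1,2) P2(1,2) _ C biclique_sub[OF hB]] by blast
  next
    assume "Y' \<subseteq> Y"
    then show False using half[OF G hyp' P2(1,2) P1(1,2) _ C' biclique_sub[OF hB']] by blast
  qed
qed

definition nx :: "nat \<Rightarrow> nat \<Rightarrow> nat" where "nx k i = (if Suc i = k then 0 else Suc i)"
definition pv :: "nat \<Rightarrow> nat \<Rightarrow> nat" where "pv k i = (if i = 0 then k - 1 else i - 1)"
definition P :: "nat \<Rightarrow> nat \<Rightarrow> nat set" where "P k i = {pv k i, i, nx k i}"

lemma nx_lt: "i < k \<Longrightarrow> nx k i < k" unfolding nx_def by auto
lemma pv_lt: "i < k \<Longrightarrow> pv k i < k" unfolding pv_def by auto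
lemma pv_nx: "i < k \<Longrightarrow> pv k (nx k i) = i" unfolding nx_def pv_def by auto
lemma nx_pv: "i < k \<Longrightarrow> nx k (pv k i) = i" unfolding nx_def pv_def by auto

lemma mod_nx: "i < k \<Longrightarrow> (i + 1) mod k = nx k i"
  unfolding nx_def by auto

lemma ce: "(i, j) \<in> cycle_edges k \<longleftrightarrow> i < k \<and> j < k \<and> (j = nx k i \<or> j = pv k i)"
proof -
  have "i < k \<Longrightarrow> j < k \<Longrightarrow> (j = nx k i \<or> i = nx k j) \<longleftrightarrow> (j = nx k i \<or> j = pv k i)"
    unfolding nx_def pv_def by auto
  then show ?thesis unfolding cycle_edges_def using mod_nx by auto
qed

lemma common_unique:
  assumes "5 \<le> k" "a < k" "b < k" "a \<noteq> b" "y1 = nx k a \<or> y1 = pv k a" "y1 = nx k b \<or> y1 = pv k b"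
   "y2 = nx k a \<or> y2 = pv k a" "y2 = nx k b \<or> y2 = pv k b"
  shows "y1 = y2"
  using assms unfolding nx_def pv_def by (auto split: if_splits)


definition N2 :: "nat \<Rightarrow> nat \<Rightarrow> nat set" where
  "N2 k e = {e, nx k e, pv k e, nx k (nx k e), pv k (pv k e)}"

lemma P_lt: "i < k \<Longrightarrow> x \<in> P k i \<Longrightarrow> x < k"
  unfolding P_def using nx_lt pv_lt by auto

lemma mem_P_sym: "x < k \<Longrightarrow> f < k \<Longrightarrow> x \<in> P k f \<longleftrightarrow> f \<in> P k x"
  unfolding P_def using pv_nx nx_pv by auto

lemma meet:
  assumes "e < k" "f < k"
  shows "P k e \<inter> P k f \<noteq> {} \<longleftrightarrow> f \<in> N2 k e"
proof
  assume "P k e \<inter> P k f \<noteq> {}"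
  then obtain x where x: "x \<in> P k e" "x \<in> P k f" by blast
  have xk: "x < k" using P_lt[OF assms(1) x(1)] .
  have "f \<in> P k x" using mem_P_sym[OF xk assms(2)] x(2) by blast
  then show "f \<in> N2 k e" using x(1) assms unfolding P_def N2_def using pv_nx nx_pv by auto
next
  assume "f \<in> N2 k e"
  then consider "f = e" | "f = nx k e" | "f = pv k e" | "f = nx k (nx k e)" | "f = pv k (pv k e)"
    unfolding N2_def by blast
  then show "P k e \<inter> P k f \<noteq> {}"
  proof cases
    case 1 then show ?thesis unfolding P_def by auto
  next
    case 2 then have "e \<in> P k f" unfolding P_def using pv_nx assms by auto
    then show ?thesis unfolding P_def by auto
  next
    case 3 then have "e \<in> P k f" unfolding P_def using nx_pv assms by auto
    then show ?thesis unfolding P_def by auto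
  next
    case 4 then have "nx k e \<in> P k f" unfolding P_def using pv_nx assms nx_lt by auto
    then show ?thesis unfolding P_def by auto
  next
    case 5 then have "pv k e \<in> P k f" unfolding P_def using nx_pv assms pv_lt by auto
    then show ?thesis unfolding P_def by auto
  qed
qed

lemma N2_sym: "e < k \<Longrightarrow> f < k \<Longrightarrow> f \<in> N2 k e \<longleftrightarrow> e \<in> N2 k f"
  using meet[of e k f] meet[of f k e] by (simp add: Int_commute)

lemma nn_ne: "5 \<le> k \<Longrightarrow> e < k \<Longrightarrow> nx k (nx k e) \<notin> {pv k e, e, nx k e}"
  unfolding nx_def pv_def by (auto split: if_splits)
lemma pp_ne: "5 \<le> k \<Longrightarrow> e < k \<Longrightarrow> pv k (pv k e) \<notin> {pv k e, e, nx k e}"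
  unfolding nx_def pv_def by (auto split: if_splits)

lemma P_inj:
  assumes "5 \<le> k" "e < k" "f < k" "P k e = P k f"
  shows "e = f"
proof -
  have "e \<in> P k f" using assms(4) unfolding P_def by auto
  then have "f \<in> P k e" using mem_P_sym assms by blast
  then consider "f = pv k e" | "f = e" | "f = nx k e" unfolding P_def by blast
  then show ?thesis
  proof cases
    case 1
    then have "pv k f \<in> P k e" using assms(4) unfolding P_def by auto
    then show ?thesis using pp_ne[OF assms(1,2)] 1 unfolding P_def by auto
  next
    case 3
    then have "nx k f \<in> P k e" using assms(4) unfolding P_def by auto
    then show ?thesis using nn_ne[OF assms(1,2)] 3 unfolding P_def by auto
  qed simp
qed

lemma ir_nx: "3 \<le> k \<Longrightarrow> i < k \<Longrightarrow> i \<noteq> nx k i \<and> i \<noteq> pv k i \<and> pv k i \<noteq> nx k i"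
  unfolding nx_def pv_def by auto

lemma cyc_simple: "3 \<le> k \<Longrightarrow> simple_graph (cycle_verts k) (cycle_edges k)"
  unfolding simple_graph_def
proof (intro conjI)
  assume k: "3 \<le> k"
  show "finite (cycle_verts k)" unfolding cycle_verts_def by simp
  show "cycle_edges k \<subseteq> cycle_verts k \<times> cycle_verts k"
    unfolding cycle_verts_def using ce by auto
  show "sym (cycle_edges k)" unfolding sym_def using ce nx_pv pv_nx by metis
  show "irrefl (cycle_edges k)" unfolding irrefl_def using ce ir_nx k by metis
qed

lemma parts_icb:
  assumes "induces_complete_bipartite V E S" "x \<in> S" "sym E"
  shows "\<exists>X Y. cbp E X Y \<and> X \<union> Y = S \<and> x \<in> X"
proof -
  from assms(1) obtain X Y where "cbp E X Y" "X \<union> Y = S"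
    unfolding icb_iff by (elim conjE exE)
  show ?thesis
  proof (cases "x \<in> X")
    case True then show ?thesis using \<open>cbp E X Y\<close> \<open>X \<union> Y = S\<close> by blast
  next
    case False
    then have "x \<in> Y" using assms(2) \<open>X \<union> Y = S\<close> by blast
    moreover have "cbp E Y X" using cbp_sym[OF \<open>cbp E X Y\<close> assms(3)] .
    moreover have "Y \<union> X = S" using \<open>X \<union> Y = S\<close> by blast
    ultimately show ?thesis by blast
  qed
qed

lemma P_icb:
  assumes k: "5 \<le> k" and i: "i < k"
  shows "induces_complete_bipartite (cycle_verts k) (cycle_edges k) (P k i)"
proof -
  have ir: "i \<noteq> nx k i \<and> i \<noteq> pv k i \<and> pv k i \<noteq> nx k i" using ir_nx k i by auto
  have e1: "(i, pv k i) \<in> cycle_edges k" "(i, nx k i) \<in> cycle_edges k"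
    using ce i nx_lt pv_lt by auto
  have pp: "nx k i \<noteq> pv k (pv k i)" using pp_ne[OF k i] by auto
  have n1: "(pv k i, nx k i) \<notin> cycle_edges k"
    using ce[of "pv k i" "nx k i" k] nx_pv[OF i] ir pp by auto
  have "sym (cycle_edges k)" using cyc_simple k unfolding simple_graph_def by auto
  then have n2: "(nx k i, pv k i) \<notin> cycle_edges k" using n1 unfolding sym_def by blast
  have n3: "\<And>z. (z, z) \<notin> cycle_edges k" using cyc_simple k unfolding simple_graph_def irrefl_def by auto
  have "cbp (cycle_edges k) {i} {pv k i, nx k i}"
    unfolding cbp_def using ir e1 n1 n2 n3 by auto
  moreover have "{i} \<union> {pv k i, nx k i} = P k i" unfolding P_def by auto
  moreover have "P k i \<subseteq> cycle_verts k" unfolding P_def cycle_verts_def using i nx_lt pv_lt by auto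
  ultimately show ?thesis unfolding icb_iff by blast
qed

lemma P_biclique:
  assumes k: "5 \<le> k" and i: "i < k"
  shows "is_biclique (cycle_verts k) (cycle_edges k) (P k i)"
  unfolding is_biclique_def
proof (intro conjI allI impI)
  show "induces_complete_bipartite (cycle_verts k) (cycle_edges k) (P k i)" using P_icb[OF k i] .
next
  fix T assume T: "induces_complete_bipartite (cycle_verts k) (cycle_edges k) T \<and> P k i \<subseteq> T"
  have sy: "sym (cycle_edges k)" using cyc_simple k unfolding simple_graph_def by auto
  have iT: "i \<in> T" using T unfolding P_def by auto
  obtain X Y where XY: "cbp (cycle_edges k) X Y" "X \<union> Y = T" "i \<in> X"
    using parts_icb[OF conjunct1[OF T] iT sy] by blast
  have TV: "T \<subseteq> cycle_verts k" using T icb_sub by blast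
  have ir: "i \<noteq> nx k i \<and> i \<noteq> pv k i \<and> pv k i \<noteq> nx k i" using ir_nx k i by auto
  have e1: "(i, pv k i) \<in> cycle_edges k" "(i, nx k i) \<in> cycle_edges k"
    using ce i nx_lt pv_lt by auto
  have pT: "pv k i \<in> T" "nx k i \<in> T" using T unfolding P_def by auto
  have pY: "pv k i \<in> Y" using cbp_IX[OF XY(1) XY(3), of "pv k i"] e1 pT XY(2) by blast
  have nY: "nx k i \<in> Y" using cbp_IX[OF XY(1) XY(3), of "nx k i"] e1 pT XY(2) by blast
  have "T \<subseteq> P k i"
  proof
    fix t assume tT: "t \<in> T"
    then have tk: "t < k" using TV unfolding cycle_verts_def by auto
    show "t \<in> P k i"
    proof (cases "t \<in> X")
      case True
      have a1: "(t, pv k i) \<in> cycle_edges k" using cbp_E[OF XY(1) True pY] .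
      have a2: "(t, nx k i) \<in> cycle_edges k" using cbp_E[OF XY(1) True nY] .
      have b1: "(pv k i, t) \<in> cycle_edges k" "(nx k i, t) \<in> cycle_edges k"
        using a1 a2 sy unfolding sym_def by blast+
      have "t = i"
        apply (rule common_unique[OF k pv_lt[OF i] nx_lt[OF i], of t i])
        using ir b1 ce[of "pv k i" t k] ce[of "nx k i" t k] nx_pv[OF i] pv_nx[OF i] by auto
      then show ?thesis unfolding P_def by auto
    next
      case False
      then have "t \<in> Y" using tT XY(2) by blast
      then have "(i, t) \<in> cycle_edges k" using cbp_E[OF XY(1) XY(3)] by blast
      then show ?thesis using ce unfolding P_def by auto
    qed
  qed
  then show "T = P k i" using T by blast
qed

lemma biclique_P:
  assumes k: "5 \<le> k" and S: "is_biclique (cycle_verts k) (cycle_edges k) S"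
  shows "\<exists>i<k. S = P k i"
proof -
  have sy: "sym (cycle_edges k)" using cyc_simple k unfolding simple_graph_def by auto
  have icb: "induces_complete_bipartite (cycle_verts k) (cycle_edges k) S"
    using S unfolding is_biclique_def by blast
  obtain X Y where XY: "cbp (cycle_edges k) X Y" "X \<union> Y = S"
    using icb unfolding icb_iff by (elim conjE exE)
  have SV: "S \<subseteq> cycle_verts k" using icb icb_sub by blast
  obtain x0 where x0: "x0 \<in> X" using XY(1) unfolding cbp_def by blast
  obtain y0 where y0: "y0 \<in> Y" using XY(1) unfolding cbp_def by blast
  have lt: "\<And>z. z \<in> S \<Longrightarrow> z < k" using SV unfolding cycle_verts_def by auto
  have "\<exists>i<k. S \<subseteq> P k i"
  proof (cases "\<forall>x\<in>X. x = x0")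
    case True
    have "S \<subseteq> P k x0"
    proof
      fix z assume "z \<in> S"
      then consider "z \<in> X" | "z \<in> Y" using XY(2) by blast
      then show "z \<in> P k x0"
      proof cases
        case 1 then show ?thesis using True unfolding P_def by auto
      next
        case 2 then have "(x0, z) \<in> cycle_edges k" using cbp_E[OF XY(1) x0] by blast
        then show ?thesis using ce unfolding P_def by auto
      qed
    qed
    moreover have "x0 < k" using lt x0 XY(2) by blast
    ultimately show ?thesis by blast
  next
    case False
    then obtain x1 where x1: "x1 \<in> X" "x1 \<noteq> x0" by blast
    have Yall: "\<forall>y\<in>Y. y = y0"
    proof
      fix y assume y: "y \<in> Y"
      have x0k: "x0 < k" and x1k: "x1 < k" using lt x0 x1 XY(2) by blast+
      have E1: "(x0, y) \<in> cycle_edges k" "(x1, y) \<in> cycle_edges k"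
               "(x0, y0) \<in> cycle_edges k" "(x1, y0) \<in> cycle_edges k"
        using cbp_E[OF XY(1)] x0 x1 y y0 by blast+
      show "y = y0"
        apply (rule common_unique[OF k x0k x1k x1(2)[symmetric]])
        using E1 ce by auto
    qed
    have "S \<subseteq> P k y0"
    proof
      fix z assume "z \<in> S"
      then consider "z \<in> X" | "z \<in> Y" using XY(2) by blast
      then show "z \<in> P k y0"
      proof cases
        case 2 then show ?thesis using Yall unfolding P_def by auto
      next
        case 1 then have "(z, y0) \<in> cycle_edges k" using cbp_E[OF XY(1) _ y0] by blast
        then have "(y0, z) \<in> cycle_edges k" using sy unfolding sym_def by blast
        then show ?thesis using ce unfolding P_def by auto
      qed
    qed
    moreover have "y0 < k" using lt y0 XY(2) by blast
    ultimately show ?thesis by blast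
  qed
  then obtain i where i: "i < k" "S \<subseteq> P k i" by blast
  have "P k i = S" using S P_icb[OF k i(1)] i(2) unfolding is_biclique_def by blast
  then show ?thesis using i(1) by blast
qed


lemma af0: "7 \<le> k \<Longrightarrow> j < k \<Longrightarrow> nx k j \<noteq> j"
  unfolding N2_def nx_def pv_def by (auto split: if_splits)

lemma af1: "7 \<le> k \<Longrightarrow> j < k \<Longrightarrow> pv k j \<noteq> j"
  unfolding N2_def nx_def pv_def by (auto split: if_splits)

lemma af2: "7 \<le> k \<Longrightarrow> j < k \<Longrightarrow> nx k (nx k (nx k j)) \<noteq> j"
  unfolding N2_def nx_def pv_def by (auto split: if_splits)

lemma af3: "7 \<le> k \<Longrightarrow> j < k \<Longrightarrow> pv k (pv k (pv k j)) \<noteq> j"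
  unfolding N2_def nx_def pv_def by (auto split: if_splits)

lemma af4: "7 \<le> k \<Longrightarrow> j < k \<Longrightarrow> nx k j \<noteq> pv k j"
  unfolding N2_def nx_def pv_def by (auto split: if_splits)

lemma af5: "7 \<le> k \<Longrightarrow> j < k \<Longrightarrow> nx k (nx k (nx k j)) \<noteq> nx k j"
  unfolding N2_def nx_def pv_def by (auto split: if_splits)

lemma af6: "7 \<le> k \<Longrightarrow> j < k \<Longrightarrow> nx k (nx k (nx k j)) \<noteq> pv k j"
  unfolding N2_def nx_def pv_def by (auto split: if_splits)

lemma af7: "7 \<le> k \<Longrightarrow> j < k \<Longrightarrow> pv k (pv k (pv k j)) \<noteq> nx k j"
  unfolding N2_def nx_def pv_def by (auto split: if_splits)

lemma af8: "7 \<le> k \<Longrightarrow> j < k \<Longrightarrow> pv k (pv k (pv k j)) \<noteq> pv k j"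
  unfolding N2_def nx_def pv_def by (auto split: if_splits)

lemma af9: "7 \<le> k \<Longrightarrow> j < k \<Longrightarrow> pv k j \<notin> N2 k (nx k (nx k (nx k j)))"
  unfolding N2_def nx_def pv_def by (auto split: if_splits)

lemma af10: "7 \<le> k \<Longrightarrow> j < k \<Longrightarrow> nx k j \<notin> N2 k (pv k (pv k (pv k j)))"
  unfolding N2_def nx_def pv_def by (cases "j < 3"; cases "j = k - 1"; auto split: if_splits)

lemmas arith_facts = af0 af1 af2 af3 af4 af5 af6 af7 af8 af9 af10

lemma arith_D:
  "7 \<le> k \<Longrightarrow> j < k \<Longrightarrow> e \<in> N2 k (nx k j) \<Longrightarrow> e \<in> N2 k (pv k j) \<Longrightarrow> e = nx k j \<or> e = pv k j \<or> e = j"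
  unfolding N2_def nx_def pv_def by (auto split: if_splits)

theorem mainTheorem2:
  fixes k :: nat and q :: "nat set"
  assumes "k \<ge> 7"
    and "q \<in> bicliques (cycle_verts k) (cycle_edges k)"
  shows "\<not> is_biclique_graph (bicliques (cycle_verts k) (cycle_edges k) - {q})
                              (del_edges (KB_edges (cycle_verts k) (cycle_edges k)) q)"
proof
  define BC where "BC = bicliques (cycle_verts k) (cycle_edges k)"
  define VG where "VG = BC - {q}"
  define EG where "EG = del_edges (KB_edges (cycle_verts k) (cycle_edges k)) q"
  have k5: "5 \<le> k" using assms(1) by simp
  assume "is_biclique_graph (bicliques (cycle_verts k) (cycle_edges k) - {q})
                              (del_edges (KB_edges (cycle_verts k) (cycle_edges k)) q)"
  then obtain VH :: "nat set" and EH f where G: "simple_graph VH EH"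
    and bij: "bij_betw f (bicliques VH EH) VG"
    and fe: "\<forall>u\<in>bicliques VH EH. \<forall>v\<in>bicliques VH EH. (u, v) \<in> KB_edges VH EH \<longleftrightarrow> (f u, f v) \<in> EG"
    unfolding is_biclique_graph_def graph_iso_def VG_def EG_def BC_def by blast
  define BH where "BH = bicliques VH EH"
  have inj: "inj_on f BH" and img: "f ` BH = VG" using bij unfolding bij_betw_def BH_def by auto
  have transfer: "U \<inter> W \<noteq> {} \<longleftrightarrow> f U \<inter> f W \<noteq> {}" if U: "U \<in> BH" and W: "W \<in> BH" and UW: "U \<noteq> W" for U W
  proof -
    have fUW: "f U \<noteq> f W" using inj U W UW unfolding inj_on_def by blast
    have fU: "f U \<in> VG" "f W \<in> VG" using img U W by blast+
    have "(U, W) \<in> KB_edges VH EH \<longleftrightarrow> U \<inter> W \<noteq> {}"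
      using U W UW unfolding KB_edges_def BH_def by auto
    moreover have "(f U, f W) \<in> EG \<longleftrightarrow> f U \<inter> f W \<noteq> {}"
      using fU fUW unfolding EG_def VG_def BC_def del_edges_def KB_edges_def by auto
    ultimately show ?thesis using fe U W unfolding BH_def by blast
  qed
  obtain j where j: "j < k" "q = P k j" using biclique_P[OF k5] assms(2) unfolding bicliques_def by blast
  define a where "a = nx k j"
  define b where "b = pv k j"
  define c where "c = nx k (nx k a)"
  define d where "d = pv k (pv k b)"
  have ak: "a < k" and bk: "b < k" and ck: "c < k" and dk: "d < k"
    unfolding a_def b_def c_def d_def using j nx_lt pv_lt by auto
  note AF = arith_facts[OF assms(1) j(1), folded a_def b_def, folded c_def d_def]
  have inV: "P k e \<in> VG" if "e < k" "e \<noteq> j" for e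
  proof -
    have "P k e \<in> BC" using P_biclique[OF k5 that(1)] unfolding BC_def bicliques_def by simp
    moreover have "P k e \<noteq> q" using P_inj[OF k5 that(1) j(1)] that(2) j(2) by blast
    ultimately show ?thesis unfolding VG_def by blast
  qed
  have Pne: "P k e \<noteq> P k e'" if "e < k" "e' < k" "e \<noteq> e'" for e e'
    using P_inj[OF k5 that(1,2)] that(3) by blast
  obtain B where B: "B \<in> BH" "f B = P k a" using inV[OF ak AF(1)] img by (metis imageE)
  obtain B' where B': "B' \<in> BH" "f B' = P k b" using inV[OF bk AF(2)] img by (metis imageE)
  obtain Cc where Cc: "Cc \<in> BH" "f Cc = P k c" using inV[OF ck AF(3)] img by (metis imageE)
  obtain Cd where Cd: "Cd \<in> BH" "f Cd = P k d" using inV[OF dk AF(4)] img by (metis imageE)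
  have ne: "B \<noteq> B'" using B B' Pne[OF ak bk AF(5)] by auto
  have "P k a \<inter> P k b \<noteq> {}"
    using meet[OF ak bk] unfolding N2_def a_def b_def using pv_nx[OF j(1)] by auto
  then have "B \<inter> B' \<noteq> {}" using transfer[OF B(1) B'(1) ne] B B' by simp
  then obtain x where x: "x \<in> B" "x \<in> B'" by blast
  have bic: "\<And>U. U \<in> BH \<Longrightarrow> is_biclique VH EH U" unfolding BH_def bicliques_def by simp
  have hyp: "D = B \<or> D = B'" if D: "is_biclique VH EH D" "D \<inter> B \<noteq> {}" "D \<inter> B' \<noteq> {}" for D
  proof (rule ccontr)
    assume nD: "\<not> (D = B \<or> D = B')"
    have DH: "D \<in> BH" using D(1) unfolding BH_def bicliques_def by simp
    have fD: "f D \<in> VG" using img DH by blast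
    then obtain e where e: "e < k" "f D = P k e"
      using biclique_P[OF k5] unfolding VG_def BC_def bicliques_def by blast
    have m1: "P k e \<inter> P k a \<noteq> {}" using transfer[OF DH B(1)] nD D(2) e B by simp
    have m2: "P k e \<inter> P k b \<noteq> {}" using transfer[OF DH B'(1)] nD D(3) e B' by simp
    have "a \<in> N2 k e" "b \<in> N2 k e" using m1 m2 meet[OF e(1) ak] meet[OF e(1) bk] by auto
    then have "e \<in> N2 k a" "e \<in> N2 k b" using N2_sym[OF e(1) ak] N2_sym[OF e(1) bk] by auto
    then have "e = a \<or> e = b \<or> e = j" using arith_D[OF assms(1) j(1)] unfolding a_def b_def by blast
    moreover have "e \<noteq> j" using fD e j(2) unfolding VG_def by auto
    moreover have "e \<noteq> a"
    proof
      assume "e = a" then have "f D = f B" using e B by simp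
      then show False using inj DH B(1) nD unfolding inj_on_def by blast
    qed
    moreover have "e \<noteq> b"
    proof
      assume "e = b" then have "f D = f B'" using e B' by simp
      then show False using inj DH B'(1) nD unfolding inj_on_def by blast
    qed
    ultimately show False by blast
  qed
  have CcB: "Cc \<noteq> B" using Cc B Pne[OF ck ak AF(6)] by auto
  have CcB': "Cc \<noteq> B'" using Cc B' Pne[OF ck bk AF(7)] by auto
  have CdB: "Cd \<noteq> B" using Cd B Pne[OF dk ak AF(8)] by auto
  have CdB': "Cd \<noteq> B'" using Cd B' Pne[OF dk bk AF(9)] by auto
  have "a \<in> N2 k c" unfolding N2_def c_def using pv_nx ak nx_lt by auto
  then have c1: "Cc \<inter> B \<noteq> {}" using transfer[OF Cc(1) B(1) CcB] meet[OF ck ak] Cc B by simp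
  have c2: "Cc \<inter> B' = {}" using transfer[OF Cc(1) B'(1) CcB'] meet[OF ck bk] Cc B' AF(10) by simp
  have "b \<in> N2 k d" unfolding N2_def d_def using nx_pv bk pv_lt by auto
  then have d1: "Cd \<inter> B' \<noteq> {}" using transfer[OF Cd(1) B'(1) CdB'] meet[OF dk bk] Cd B' by simp
  have d2: "Cd \<inter> B = {}" using transfer[OF Cd(1) B(1) CdB] meet[OF dk ak] Cd B AF(11) by simp
  show False
    using keyL[OF G bic[OF B(1)] bic[OF B'(1)] x hyp bic[OF Cc(1)] c1 c2 bic[OF Cd(1)] d1 d2] by blast
qed

end
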